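(* There is an algorithm which, given an order-3 symmetric tensor $T\in(\mathbb{C}^n)^{\otimes 3}$ and a matrix $V\in M_{n,r}(\mathbb{C})$ with $r\le n$, outputs $s_1,\dots,s_r$ with $s_i=\mathrm{Tr}(S_i)$ for all $i\in[r]$, where $S_1,\dots,S_r$ are the slices of $S=(V\otimes V\otimes V).T\in(\mathbb{C}^r)^{\otimes 3}$, using $O(n^3)$ arithmetic operations.
   Context: The $k$-th slice of a tensor $T=(T_{ijk})$ is the matrix $T_k=(T_{ijk})_{i,j}$. For $A\in\mathbb{C}^{n\times r}$, $(A\otimes A\otimes A).T\in(\mathbb{C}^r)^{\otimes3}$ is defined by $\big((A\otimes A\otimes A).T\big)_{i_1i_2i_3}=\sum_{j_1,j_2,j_3=1}^n A_{j_1i_1}A_{j_2i_2}A_{j_3i_3}T_{j_1j_2j_3}$. Arithmetic operations are exact operations over $\mathbb{C}$. *)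

theory Defs
  imports Complex_Main
begin

text \<open>Algebraic cost model: straight-line programs over the complex numbers.
  Each instruction produces one new value; operands refer (0-based) to values
  produced by strictly earlier instructions.  Reading an input entry or a
  constant is free; each of Add, Sub, Mul, Div is one arithmetic operation.
  Inputs: the tensor T (entry T i j k, 0-based indices < n) and the matrix
  V (entry V j i, row j < n, column i < r).\<close>

datatype slp_instr =
    InT nat nat nat
  | InV nat nat
  | Cst complex
  | Add nat nat
  | Sub nat nat
  | Mul nat nat
  | Div nat nat

fun slp_step :: "(nat \<Rightarrow> nat \<Rightarrow> nat \<Rightarrow> complex) \<Rightarrow> (nat \<Rightarrow> nat \<Rightarrow> complex)
                 \<Rightarrow> complex list \<Rightarrow> slp_instr \<Rightarrow> complex" where
  "slp_step T V vs (InT i j k) = T i j k"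
| "slp_step T V vs (InV j i) = V j i"
| "slp_step T V vs (Cst c) = c"
| "slp_step T V vs (Add a b) = vs ! a + vs ! b"
| "slp_step T V vs (Sub a b) = vs ! a - vs ! b"
| "slp_step T V vs (Mul a b) = vs ! a * vs ! b"
| "slp_step T V vs (Div a b) = vs ! a / vs ! b"

definition slp_eval :: "(nat \<Rightarrow> nat \<Rightarrow> nat \<Rightarrow> complex) \<Rightarrow> (nat \<Rightarrow> nat \<Rightarrow> complex)
                 \<Rightarrow> slp_instr list \<Rightarrow> complex list" where
  "slp_eval T V prog = foldl (\<lambda>vs ins. vs @ [slp_step T V vs ins]) [] prog"

fun instr_wf :: "nat \<Rightarrow> slp_instr \<Rightarrow> bool" where
  "instr_wf p (Add a b) = (a < p \<and> b < p)"
| "instr_wf p (Sub a b) = (a < p \<and> b < p)"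
| "instr_wf p (Mul a b) = (a < p \<and> b < p)"
| "instr_wf p (Div a b) = (a < p \<and> b < p)"
| "instr_wf p _ = True"

definition slp_wf :: "slp_instr list \<Rightarrow> bool" where
  "slp_wf prog = (\<forall>p < length prog. instr_wf p (prog ! p))"

fun is_arith :: "slp_instr \<Rightarrow> bool" where
  "is_arith (Add _ _) = True"
| "is_arith (Sub _ _) = True"
| "is_arith (Mul _ _) = True"
| "is_arith (Div _ _) = True"
| "is_arith _ = False"

definition arith_cost :: "slp_instr list \<Rightarrow> nat" where
  "arith_cost prog = length (filter is_arith prog)"

definition symmetric_tensor3 :: "nat \<Rightarrow> (nat \<Rightarrow> nat \<Rightarrow> nat \<Rightarrow> complex) \<Rightarrow> bool" where
  "symmetric_tensor3 n T = (\<forall>i<n. \<forall>j<n. \<forall>k<n.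
      T i j k = T j i k \<and> T i j k = T i k j)"

definition multilin :: "nat \<Rightarrow> (nat \<Rightarrow> nat \<Rightarrow> complex) \<Rightarrow> (nat \<Rightarrow> nat \<Rightarrow> nat \<Rightarrow> complex)
                        \<Rightarrow> nat \<Rightarrow> nat \<Rightarrow> nat \<Rightarrow> complex" where
  "multilin n V T i1 i2 i3 =
     (\<Sum>j1<n. \<Sum>j2<n. \<Sum>j3<n. V j1 i1 * V j2 i2 * V j3 i3 * T j1 j2 j3)"

definition slice_trace :: "nat \<Rightarrow> (nat \<Rightarrow> nat \<Rightarrow> nat \<Rightarrow> complex) \<Rightarrow> nat \<Rightarrow> complex" where
  "slice_trace r S k = (\<Sum>i<r. S i i k)"

end

theory Submission imports Defs begin

lemma slp_eval_snoc: "slp_eval T V (xs@[x]) = slp_eval T V xs @ [slp_step T V (slp_eval T V xs) x]"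
  by (simp add: slp_eval_def)

lemma slp_eval_len: "length (slp_eval T V xs) = length xs"
  by (induction xs rule: rev_induct) (simp_all add: slp_eval_snoc, simp add: slp_eval_def)

lemma step_cong: "instr_wf p ins \<Longrightarrow> p \<le> length vs \<Longrightarrow> slp_step T V (vs @ ws) ins = slp_step T V vs ins"
  by (cases ins) (auto simp: nth_append)

lemma val_char: "slp_wf prog \<Longrightarrow> p < length prog \<Longrightarrow>
   slp_eval T V prog ! p = slp_step T V (slp_eval T V prog) (prog!p)"
proof (induction prog arbitrary: p rule: rev_induct)
  case Nil then show ?case by simp
next
  case (snoc x xs)
  have wfx: "slp_wf xs" using snoc.prems(1) unfolding slp_wf_def
    by (metis length_append_singleton less_SucI nth_append)
  have wfp: "instr_wf p ((xs@[x])!p)" using snoc.prems unfolding slp_wf_def by blast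
  show ?case
  proof (cases "p < length xs")
    case True
    then have "slp_eval T V (xs@[x]) ! p = slp_step T V (slp_eval T V xs) (xs!p)"
      using snoc.IH[OF wfx] by (simp add: slp_eval_snoc nth_append slp_eval_len)
    also have "\<dots> = slp_step T V (slp_eval T V (xs@[x])) ((xs@[x])!p)"
      using step_cong[of p "xs!p" "slp_eval T V xs"] wfp True
      by (simp add: slp_eval_snoc nth_append slp_eval_len)
    finally show ?thesis .
  next
    case False
    then have p: "p = length xs" using snoc.prems by simp
    show ?thesis using step_cong[of p x "slp_eval T V xs"] wfp p
      by (simp add: slp_eval_snoc nth_append slp_eval_len)
  qed
qed

definition gad :: "nat \<Rightarrow> (nat\<Rightarrow>nat) \<Rightarrow> (nat\<Rightarrow>nat) \<Rightarrow> nat \<Rightarrow> slp_instr" where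
  "gad start a b m = (if m = 0 then Cst 0 else if odd m then Mul (a (m div 2)) (b (m div 2))
      else Add (start + m - 2) (start + m - 1))"

lemma gad_val:
  assumes wf: "slp_wf prog" and len: "start + 2*L < length prog"
  and code: "\<And>m. m \<le> 2*L \<Longrightarrow> prog ! (start + m) = gad start a b m"
  shows "t \<le> L \<Longrightarrow> slp_eval T V prog ! (start + 2*t) = (\<Sum>s<t. slp_eval T V prog ! a s * slp_eval T V prog ! b s)"
proof (induction t)
  case 0
  have "prog ! start = Cst 0" using code[of 0] by (simp add: gad_def)
  then show ?case using val_char[OF wf, of start] len by simp
next
  case (Suc t)
  have c1: "prog ! (start + 2*Suc t) = Add (start + 2*t) (start + 2*t+1)"
    using code[of "2*Suc t"] Suc.prems by (simp add: gad_def)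
  have c2: "prog ! (start + 2*t+1) = Mul (a t) (b t)"
    using code[of "2*t+1"] Suc.prems by (simp add: gad_def)
  have "slp_eval T V prog ! (start + 2*Suc t) = slp_eval T V prog ! (start + 2*t) + slp_eval T V prog ! (start + 2*t+1)"
    using val_char[OF wf, of "start + 2*Suc t"] c1 len Suc.prems by simp
  moreover have "slp_eval T V prog ! (start + 2*t+1) = slp_eval T V prog ! a t * slp_eval T V prog ! b t"
    using val_char[OF wf, of "start + 2*t+1"] c2 len Suc.prems by simp
  ultimately show ?case using Suc by simp
qed


definition "B3 (r::nat) = 1 + 2*r"
definition "base3 (n::nat) (r::nat) = n*r + n*n*n"
definition "base4 (n::nat) (r::nat) = base3 n r + n*n*B3 r"
definition "B4 (n::nat) = 1 + 2*(n*n)"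
definition "base5 (n::nat) (r::nat) = base4 n r + n*B4 n"
definition "B5 (n::nat) = 1 + 2*n"
definition "NN (n::nat) (r::nat) = base5 n r + r*B5 n"

definition "vaddr (r::nat) (j::nat) (i::nat) = j*r + i"
definition "taddr (n::nat) (r::nat) (j1::nat) j2 j3 = n*r + ((j1*n+j2)*n + j3)"
definition "waddr (n::nat) (r::nat) (j1::nat) j2 = base3 n r + (j1*n+j2)*B3 r + 2*r"
definition "uaddr (n::nat) (r::nat) (j::nat) = base4 n r + j*B4 n + 2*(n*n)"
definition "saddr (n::nat) (r::nat) (k::nat) = base5 n r + k*B5 n + 2*n"

definition f :: "nat \<Rightarrow> nat \<Rightarrow> nat \<Rightarrow> slp_instr" where
 "f n r p =
  (if p < n*r then InV (p div r) (p mod r)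
   else if p < base3 n r then InT ((p - n*r) div n div n) ((p-n*r) div n mod n) ((p-n*r) mod n)
   else if p < base4 n r then
     gad (base3 n r + (p - base3 n r) div B3 r * B3 r)
         (\<lambda>t. vaddr r ((p - base3 n r) div B3 r div n) t)
         (\<lambda>t. vaddr r ((p - base3 n r) div B3 r mod n) t) ((p - base3 n r) mod B3 r)
   else if p < base5 n r then
     gad (base4 n r + (p - base4 n r) div B4 n * B4 n)
         (\<lambda>t. waddr n r (t div n) (t mod n))
         (\<lambda>t. taddr n r (t div n) (t mod n) ((p - base4 n r) div B4 n)) ((p - base4 n r) mod B4 n)
   else
     gad (base5 n r + (p - base5 n r) div B5 n * B5 n)
         (\<lambda>t. vaddr r t ((p - base5 n r) div B5 n))
         (\<lambda>t. uaddr n r t) ((p - base5 n r) mod B5 n))"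

definition "prog n r = map (f n r) [0..<NN n r]"

lemma idx_lt: "(b::nat) < M \<Longrightarrow> m < c \<Longrightarrow> b*c + m < M*c"
proof -
  assume "b < M" "m < c"
  then have "b*c + m < (b+1)*c" by simp
  also have "\<dots> \<le> M*c" using \<open>b < M\<close> by (intro mult_le_mono1) simp
  finally show ?thesis .
qed

lemma divmod_simp: "m < (c::nat) \<Longrightarrow> (b*c + m) div c = b \<and> (b*c+m) mod c = m"
  by simp

lemma prog_nth: "p < NN n r \<Longrightarrow> prog n r ! p = f n r p"
  by (simp add: prog_def)

lemma len_prog: "length (prog n r) = NN n r" by (simp add: prog_def)

lemma base_le: "n*r \<le> base3 n r" "base3 n r \<le> base4 n r" "base4 n r \<le> base5 n r" "base5 n r \<le> NN n r"
  unfolding base3_def base4_def base5_def NN_def by (rule le_add1)+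


lemma odd_div: "odd (m::nat) \<Longrightarrow> m < 1 + 2*K \<Longrightarrow> m div 2 < K" by presburger

lemma gad_wf: "start + m = p \<Longrightarrow> (odd m \<Longrightarrow> a (m div 2) < p \<and> b (m div 2) < p) \<Longrightarrow> instr_wf p (gad start a b m)"
  by (auto simp: gad_def)

lemma tdivmod: "(t::nat) < n*n \<Longrightarrow> t div n < n \<and> t mod n < n \<and> t div n * n + t mod n = t"
proof -
  assume a: "t < n*n"
  then have "n > 0" by (cases n) auto
  then show ?thesis using a by (simp add: less_mult_imp_div_less)
qed

lemma wf_prog: "slp_wf (prog n r)"
  unfolding slp_wf_def len_prog
proof (intro allI impI)
  fix p assume pN: "p < NN n r"
  have bl: "n*r \<le> base3 n r" "base3 n r \<le> base4 n r" "base4 n r \<le> base5 n r" "base5 n r \<le> NN n r"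
    by (rule base_le)+
  show "instr_wf p (prog n r ! p)"
  proof -
    consider "p < base3 n r" | "base3 n r \<le> p" "p < base4 n r" | "base4 n r \<le> p" "p < base5 n r"
      | "base5 n r \<le> p" by linarith
    then have "instr_wf p (f n r p)"
    proof cases
      case 1 then show ?thesis by (simp add: f_def)
    next
      case 2
      define q where "q = p - base3 n r"
      define b where "b = q div B3 r"
      define m where "m = q mod B3 r"
      have qlt: "q < n*n*B3 r" using 2 unfolding q_def base4_def by simp
      have blt: "b < n*n" using qlt unfolding b_def by (simp add: less_mult_imp_div_less)
      have mlt: "m < B3 r" unfolding m_def B3_def by simp
      have tlt: "m div 2 < r" if "odd m" using odd_div[OF that] mlt unfolding B3_def by blast
      have bd: "b div n < n" "b mod n < n" using tdivmod[OF blt] by auto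
      have va: "vaddr r x (m div 2) < n*r" if "x < n" "odd m" for x
        using idx_lt[OF that(1) tlt[OF that(2)]] unfolding vaddr_def by (simp add: mult.commute)
      have fp: "f n r p = gad (base3 n r + b * B3 r) (\<lambda>t. vaddr r (b div n) t) (\<lambda>t. vaddr r (b mod n) t) m"
        using 2 bl unfolding f_def q_def b_def m_def by simp
      have se: "base3 n r + b * B3 r + m = p" unfolding b_def m_def q_def using 2 by simp
      have h1: "vaddr r (b div n) (m div 2) < p" if "odd m" using va[OF bd(1) that] bl 2 by linarith
      have h2: "vaddr r (b mod n) (m div 2) < p" if "odd m" using va[OF bd(2) that] bl 2 by linarith
      show ?thesis unfolding fp by (rule gad_wf[OF se]) (use h1 h2 in simp)
    next
      case 3
      define q where "q = p - base4 n r"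
      define j where "j = q div B4 n"
      define m where "m = q mod B4 n"
      have qlt: "q < n*B4 n" using 3 unfolding q_def base5_def by simp
      have jlt: "j < n" using qlt unfolding j_def by (simp add: less_mult_imp_div_less)
      have mlt: "m < B4 n" unfolding m_def B4_def by simp
      have tlt: "m div 2 < n*n" if "odd m" using odd_div[OF that] mlt unfolding B4_def by blast
      have td: "m div 2 div n * n + m div 2 mod n = m div 2" if "odd m" using tdivmod[OF tlt[OF that]] by auto
      have wa: "waddr n r (m div 2 div n) (m div 2 mod n) < base4 n r" if "odd m"
        using idx_lt[OF tlt[OF that], of "2*r" "B3 r"] td[OF that] unfolding waddr_def base4_def B3_def by simp
      have ta: "taddr n r (m div 2 div n) (m div 2 mod n) j < base3 n r" if "odd m"
        using idx_lt[OF tlt[OF that] jlt] td[OF that] unfolding taddr_def base3_def by simp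
      have fp: "f n r p = gad (base4 n r + j * B4 n) (\<lambda>t. waddr n r (t div n) (t mod n))
         (\<lambda>t. taddr n r (t div n) (t mod n) j) m"
        using 3 bl unfolding f_def q_def j_def m_def by simp
      have se: "base4 n r + j * B4 n + m = p" unfolding j_def m_def q_def using 3 by simp
      have h1: "waddr n r (m div 2 div n) (m div 2 mod n) < p" if "odd m" using wa[OF that] bl 3 by linarith
      have h2: "taddr n r (m div 2 div n) (m div 2 mod n) j < p" if "odd m" using ta[OF that] bl 3 by linarith
      show ?thesis unfolding fp by (rule gad_wf[OF se]) (use h1 h2 in simp)
    next
      case 4
      define q where "q = p - base5 n r"
      define k where "k = q div B5 n"
      define m where "m = q mod B5 n"
      have qlt: "q < r*B5 n" using 4 pN unfolding q_def NN_def by simp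
      have klt: "k < r" using qlt unfolding k_def by (simp add: less_mult_imp_div_less)
      have mlt: "m < B5 n" unfolding m_def B5_def by simp
      have tlt: "m div 2 < n" if "odd m" using odd_div[OF that] mlt unfolding B5_def by blast
      have va: "vaddr r (m div 2) k < n*r" if "odd m"
        using idx_lt[OF tlt[OF that] klt] unfolding vaddr_def by simp
      have ua: "uaddr n r (m div 2) < base5 n r" if "odd m"
        using idx_lt[OF tlt[OF that], of "2*(n*n)" "B4 n"] unfolding uaddr_def base5_def B4_def by simp
      have fp: "f n r p = gad (base5 n r + k * B5 n) (\<lambda>t. vaddr r t k) (\<lambda>t. uaddr n r t) m"
        using 4 bl unfolding f_def q_def k_def m_def by simp
      have se: "base5 n r + k * B5 n + m = p" unfolding k_def m_def q_def using 4 by simp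
      have h1: "vaddr r (m div 2) k < p" if "odd m" using va[OF that] bl 4 by linarith
      have h2: "uaddr n r (m div 2) < p" if "odd m" using ua[OF that] bl 4 by linarith
      show ?thesis unfolding fp by (rule gad_wf[OF se]) (use h1 h2 in simp)
    qed
    then show ?thesis using prog_nth[OF pN] by simp
  qed
qed

lemma inner: "(\<Sum>t\<in>{m*n..<m*n+(n::nat)}. g (t div n) (t mod n)) = (\<Sum>j<n. (g m j :: 'a::comm_monoid_add))"
proof -
  have "(\<Sum>t\<in>{m*n..<m*n+(n::nat)}. g (t div n) (t mod n)) = (\<Sum>j\<in>{0..<n}. g ((j + m*n) div n) ((j+m*n) mod n))"
    using sum.shift_bounds_nat_ivl[of "\<lambda>t. g (t div n) (t mod n)" 0 "m*n" n] by (simp add: add.commute)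
  also have "\<dots> = (\<Sum>j<n. g m j)"
    by (intro sum.cong) (auto simp: atLeast0LessThan)
  finally show ?thesis .
qed
lemma reidx: "(\<Sum>t<(n::nat)*n. g (t div n) (t mod n)) = (\<Sum>j1<n. \<Sum>j2<n. (g j1 j2 :: 'a::comm_monoid_add))"
  using sum.nat_group[of "\<lambda>t. g (t div n) (t mod n)" n n, symmetric] by (simp add: inner)

lemma val_f: "p < NN n r \<Longrightarrow> slp_eval T V (prog n r) ! p = slp_step T V (slp_eval T V (prog n r)) (f n r p)"
  using val_char[OF wf_prog, of p n r T V] prog_nth[of p n r] len_prog[of n r] by simp

lemma val_V: assumes "j < n" "i < r" shows "slp_eval T V (prog n r) ! vaddr r j i = V j i"
proof -
  have lt: "vaddr r j i < n*r" using idx_lt[OF assms] unfolding vaddr_def .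
  then have "vaddr r j i < NN n r" using base_le by (meson less_le_trans)
  then show ?thesis using val_f[of "vaddr r j i" n r T V] lt assms(2)
    by (simp add: f_def vaddr_def)
qed

lemma val_T: assumes "j1 < n" "j2 < n" "j3 < n" shows "slp_eval T V (prog n r) ! taddr n r j1 j2 j3 = T j1 j2 j3"
proof -
  have b: "j1*n+j2 < n*n" using idx_lt[OF assms(1,2)] .
  have lt: "(j1*n+j2)*n + j3 < n*n*n" using idx_lt[OF b assms(3)] .
  have lt2: "taddr n r j1 j2 j3 < base3 n r" "n*r \<le> taddr n r j1 j2 j3"
    using lt unfolding taddr_def base3_def by simp_all
  then have "taddr n r j1 j2 j3 < NN n r" using base_le by (meson less_le_trans)
  then show ?thesis using val_f[of "taddr n r j1 j2 j3" n r T V] lt2 assms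
    by (simp add: f_def taddr_def)
qed

lemma val_W: assumes "j1 < n" "j2 < n"
  shows "slp_eval T V (prog n r) ! waddr n r j1 j2 = (\<Sum>t<r. V j1 t * V j2 t)"
proof -
  define b where "b = j1*n+j2"
  define start where "start = base3 n r + b * B3 r"
  have blt: "b < n*n" unfolding b_def using idx_lt[OF assms(1,2)] .
  have npos: "n > 0" using assms by simp
  have bd: "b div n = j1" "b mod n = j2" unfolding b_def using assms npos by simp_all
  have reg: "start + m < base4 n r" if "m \<le> 2*r" for m
    using idx_lt[OF blt, of m "B3 r"] that unfolding start_def base4_def B3_def by simp
  have len: "start + 2*r < length (prog n r)"
    using reg[of "2*r"] base_le len_prog by (metis le_refl less_le_trans)
  have code: "prog n r ! (start + m) = gad start (vaddr r j1) (vaddr r j2) m" if "m \<le> 2*r" for m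
  proof -
    have "start + m < NN n r" using reg[OF that] base_le by (meson less_le_trans)
    moreover have "\<not> start + m < base3 n r" "\<not> start + m < n*r" using base_le[of n r] unfolding start_def by linarith+
    moreover have "(start + m - base3 n r) div B3 r = b \<and> (start + m - base3 n r) mod B3 r = m"
    proof -
      have "m < B3 r" using that unfolding B3_def by simp
      moreover have "start + m - base3 n r = b * B3 r + m" unfolding start_def by simp
      ultimately show ?thesis using divmod_simp by presburger
    qed
    ultimately show ?thesis using reg[OF that] bd by (simp add: prog_nth f_def start_def)
  qed
  have "slp_eval T V (prog n r) ! (start + 2*r) = (\<Sum>s<r. slp_eval T V (prog n r) ! vaddr r j1 s * slp_eval T V (prog n r) ! vaddr r j2 s)"
    by (rule gad_val[OF wf_prog len code]) simp_all
  also have "\<dots> = (\<Sum>t<r. V j1 t * V j2 t)" using val_V assms by simp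
  finally show ?thesis unfolding waddr_def start_def b_def .
qed


lemma val_U: assumes "j < n"
  shows "slp_eval T V (prog n r) ! uaddr n r j =
    (\<Sum>t<n*n. (\<Sum>i<r. V (t div n) i * V (t mod n) i) * T (t div n) (t mod n) j)"
proof -
  define start where "start = base4 n r + j * B4 n"
  have reg: "start + m < base5 n r" if "m \<le> 2*(n*n)" for m
    using idx_lt[OF assms, of m "B4 n"] that unfolding start_def base5_def B4_def by simp
  have len: "start + 2*(n*n) < length (prog n r)"
    using reg[of "2*(n*n)"] base_le len_prog by (metis le_refl less_le_trans)
  have code: "prog n r ! (start + m) = gad start (\<lambda>t. waddr n r (t div n) (t mod n))
         (\<lambda>t. taddr n r (t div n) (t mod n) j) m" if "m \<le> 2*(n*n)" for m
  proof -
    have "start + m < NN n r" using reg[OF that] base_le by (meson less_le_trans)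
    moreover have "\<not> start + m < base4 n r" "\<not> start + m < base3 n r" "\<not> start + m < n*r"
      using base_le[of n r] unfolding start_def by linarith+
    moreover have "(start + m - base4 n r) div B4 n = j \<and> (start + m - base4 n r) mod B4 n = m"
    proof -
      have "m < B4 n" using that unfolding B4_def by simp
      moreover have "start + m - base4 n r = j * B4 n + m" unfolding start_def by simp
      ultimately show ?thesis using divmod_simp by presburger
    qed
    ultimately show ?thesis using reg[OF that] by (simp add: prog_nth f_def start_def)
  qed
  have "slp_eval T V (prog n r) ! (start + 2*(n*n)) = (\<Sum>s<n*n. slp_eval T V (prog n r) ! waddr n r (s div n) (s mod n) *
      slp_eval T V (prog n r) ! taddr n r (s div n) (s mod n) j)"
    by (rule gad_val[OF wf_prog len code]) simp_all
  also have "\<dots> = (\<Sum>t<n*n. (\<Sum>i<r. V (t div n) i * V (t mod n) i) * T (t div n) (t mod n) j)"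
  proof (rule sum.cong[OF refl])
    fix t assume "t \<in> {..<n*n}"
    then have "t div n < n" "t mod n < n" using tdivmod by auto
    then show "slp_eval T V (prog n r) ! waddr n r (t div n) (t mod n) *
      slp_eval T V (prog n r) ! taddr n r (t div n) (t mod n) j =
      (\<Sum>i<r. V (t div n) i * V (t mod n) i) * T (t div n) (t mod n) j"
      using val_W val_T assms by simp
  qed
  finally show ?thesis unfolding uaddr_def start_def .
qed

lemma val_S: assumes "k < r"
  shows "slp_eval T V (prog n r) ! saddr n r k =
    (\<Sum>t<n. V t k * slp_eval T V (prog n r) ! uaddr n r t)"
proof -
  define start where "start = base5 n r + k * B5 n"
  have reg: "start + m < NN n r" if "m \<le> 2*n" for m
    using idx_lt[OF assms, of m "B5 n"] that unfolding start_def NN_def B5_def by simp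
  have len: "start + 2*n < length (prog n r)"
    using reg[of "2*n"] len_prog by simp
  have code: "prog n r ! (start + m) = gad start (\<lambda>t. vaddr r t k) (\<lambda>t. uaddr n r t) m" if "m \<le> 2*n" for m
  proof -
    have "\<not> start + m < base5 n r" "\<not> start + m < base4 n r" "\<not> start + m < base3 n r" "\<not> start + m < n*r"
      using base_le[of n r] unfolding start_def by linarith+
    moreover have "(start + m - base5 n r) div B5 n = k \<and> (start + m - base5 n r) mod B5 n = m"
    proof -
      have "m < B5 n" using that unfolding B5_def by simp
      moreover have "start + m - base5 n r = k * B5 n + m" unfolding start_def by simp
      ultimately show ?thesis using divmod_simp by presburger
    qed
    ultimately show ?thesis using reg[OF that] by (simp add: prog_nth f_def start_def)
  qed
  have "slp_eval T V (prog n r) ! (start + 2*n) = (\<Sum>s<n. slp_eval T V (prog n r) ! vaddr r s k *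
      slp_eval T V (prog n r) ! uaddr n r s)"
    by (rule gad_val[OF wf_prog len code]) simp_all
  also have "\<dots> = (\<Sum>t<n. V t k * slp_eval T V (prog n r) ! uaddr n r t)"
    using val_V assms by simp
  finally show ?thesis unfolding saddr_def start_def .
qed

lemma ident: fixes V :: "nat \<Rightarrow> nat \<Rightarrow> complex"
  shows "(\<Sum>t<n. V t k * (\<Sum>j1<n. \<Sum>j2<n. (\<Sum>i<r. V j1 i * V j2 i) * T j1 j2 t)) =
     slice_trace r (multilin n V T) k"
proof -
  have "(\<Sum>t<n. V t k * (\<Sum>j1<n. \<Sum>j2<n. (\<Sum>i<r. V j1 i * V j2 i) * T j1 j2 t))
     = (\<Sum>t<n. \<Sum>j1<n. \<Sum>j2<n. \<Sum>i<r. V j1 i * V j2 i * V t k * T j1 j2 t)"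
    by (simp add: sum_distrib_left sum_distrib_right mult_ac)
  also have "\<dots> = (\<Sum>j1<n. \<Sum>t<n. \<Sum>j2<n. \<Sum>i<r. V j1 i * V j2 i * V t k * T j1 j2 t)"
    by (rule sum.swap)
  also have "\<dots> = (\<Sum>j1<n. \<Sum>j2<n. \<Sum>t<n. \<Sum>i<r. V j1 i * V j2 i * V t k * T j1 j2 t)"
    by (rule sum.cong[OF refl], rule sum.swap)
  also have "\<dots> = (\<Sum>j1<n. \<Sum>j2<n. \<Sum>i<r. \<Sum>t<n. V j1 i * V j2 i * V t k * T j1 j2 t)"
    by (rule sum.cong[OF refl], rule sum.cong[OF refl], rule sum.swap)
  also have "\<dots> = (\<Sum>j1<n. \<Sum>i<r. \<Sum>j2<n. \<Sum>t<n. V j1 i * V j2 i * V t k * T j1 j2 t)"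
    by (rule sum.cong[OF refl], rule sum.swap)
  also have "\<dots> = (\<Sum>i<r. \<Sum>j1<n. \<Sum>j2<n. \<Sum>t<n. V j1 i * V j2 i * V t k * T j1 j2 t)"
    by (rule sum.swap)
  finally show ?thesis unfolding slice_trace_def multilin_def .
qed

lemma cost_le: "arith_cost (prog n r) \<le> NN n r - base3 n r"
proof -
  have sub: "{p \<in> set [0..<NN n r]. is_arith (f n r p)} \<subseteq> {base3 n r..<NN n r}"
  proof
    fix p assume "p \<in> {p \<in> set [0..<NN n r]. is_arith (f n r p)}"
    then have "p < NN n r" "is_arith (f n r p)" by auto
    moreover have "\<not> p < base3 n r" using calculation(2) by (auto simp: f_def split: if_splits)
    ultimately show "p \<in> {base3 n r..<NN n r}" by simp
  qed
  have "arith_cost (prog n r) = length (filter (is_arith \<circ> f n r) [0..<NN n r])"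
    by (simp add: arith_cost_def prog_def filter_map)
  also have "\<dots> = card {p \<in> set [0..<NN n r]. is_arith (f n r p)}"
    by (subst distinct_length_filter) (auto intro: arg_cong[where f=card])
  also have "\<dots> \<le> card {base3 n r..<NN n r}" by (rule card_mono[OF _ sub]) simp
  finally show ?thesis by simp
qed

lemma cost_bound: assumes "r \<le> n" shows "NN n r - base3 n r \<le> 9 * n^3"
proof (cases "n = 0")
  case True then show ?thesis using assms by (simp add: NN_def base5_def base4_def)
next
  case False
  have c1: "n*n \<le> n*n*n" using False by simp
  have c2: "n \<le> n*n*n" using False by (metis c1 le_square le_trans mult.commute)
  have d1: "n*n*r \<le> n*n*n" using assms by simp
  have d2: "n*r \<le> n*n" using assms by simp
  have d3: "r \<le> n" using assms .
  have "NN n r - base3 n r = n*n + 2*(n*n*r) + n + 2*(n*n*n) + r + 2*(n*r)"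
    unfolding NN_def base5_def base4_def B3_def B4_def B5_def by (simp add: algebra_simps)
  also have "\<dots> \<le> 9 * (n*n*n)" using c1 c2 d1 d2 d3 by linarith
  finally show ?thesis by (simp add: power3_eq_cube)
qed

theorem theorem3p3:
  shows "\<exists>C::real. \<forall>n r. r \<le> n \<longrightarrow>
    (\<exists>prog outs. slp_wf prog \<and> length outs = r \<and> (\<forall>q\<in>set outs. q < length prog) \<and>
       real (arith_cost prog) \<le> C * real n ^ 3 \<and>
       (\<forall>T V. symmetric_tensor3 n T \<longrightarrow>
          (\<forall>i<r. slp_eval T V prog ! (outs ! i) = slice_trace r (multilin n V T) i)))"
proof (intro exI[of _ 9] allI impI)
  fix n r :: nat assume rn: "r \<le> n"
  let ?outs = "map (saddr n r) [0..<r]"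
  have outs_lt: "\<forall>q\<in>set ?outs. q < length (prog n r)"
  proof
    fix q assume "q \<in> set ?outs"
    then obtain k where k: "k < r" "q = saddr n r k" by auto
    have "2*n < B5 n" unfolding B5_def by simp
    from idx_lt[OF k(1) this] show "q < length (prog n r)"
      unfolding k(2) saddr_def len_prog NN_def by simp
  qed
  have cost: "real (arith_cost (prog n r)) \<le> 9 * real n ^ 3"
  proof -
    have "arith_cost (prog n r) \<le> 9 * n^3" using cost_le cost_bound[OF rn] by (meson le_trans)
    then have "real (arith_cost (prog n r)) \<le> real (9 * n^3)" by linarith
    then show ?thesis by simp
  qed
  have vals: "slp_eval T V (prog n r) ! (?outs ! i) = slice_trace r (multilin n V T) i" if "i < r" for T V i
  proof -
    have "slp_eval T V (prog n r) ! (?outs ! i) = (\<Sum>t<n. V t i * slp_eval T V (prog n r) ! uaddr n r t)"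
      using that val_S by simp
    also have "\<dots> = (\<Sum>t<n. V t i * (\<Sum>j1<n. \<Sum>j2<n. (\<Sum>i<r. V j1 i * V j2 i) * T j1 j2 t))"
      by (rule sum.cong[OF refl]) (simp add: val_U reidx[where g="\<lambda>a b. (\<Sum>i<r. V a i * V b i) * T a b _"])
    also have "\<dots> = slice_trace r (multilin n V T) i" by (rule ident)
    finally show ?thesis .
  qed
  show "\<exists>prog outs. slp_wf prog \<and> length outs = r \<and> (\<forall>q\<in>set outs. q < length prog) \<and>
       real (arith_cost prog) \<le> 9 * real n ^ 3 \<and>
       (\<forall>T V. symmetric_tensor3 n T \<longrightarrow>
          (\<forall>i<r. slp_eval T V prog ! (outs ! i) = slice_trace r (multilin n V T) i))"
    using wf_prog outs_lt cost vals by (intro exI[of _ "prog n r"] exI[of _ ?outs]) auto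
qed

end
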